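(* Let $I(z)$ be a nonzero polynomial solution of the KZ system over $\mathbb{F}_p$ with $\mathrm{id}$-leading term $C z_1^{d_1}\cdots z_n^{d_n}$, $C\in\mathbb{F}_p^n$. Then $$\sum_{j=1}^nM_jC_j=0,\qquad \Omega^M_jC=d_jC\ \ (j=1,\dots,n-1),\qquad d_n\equiv0\pmod p,$$ with equalities in $\mathbb{F}_p$.
   Context: Let $p,q$ be primes and $n$ a positive integer with $p>n\ge2$, $p>q$. Fix positive integers $m_1,\dots,m_n<q$; $M_i$ is the least positive integer with $M_i\equiv -m_iq^{-1}\pmod p$. For $i\ne j$ let $\Omega_{ij}$ be the $n\times n$ matrix with only nonzero entries $(\Omega_{ij})_{ii}=-m_j$, $(\Omega_{ij})_{ij}=m_j$, $(\Omega_{ij})_{ji}=m_i$, $(\Omega_{ij})_{jj}=-m_i$. A polynomial solution of the KZ system over $\mathbb{F}_p$ is $I\in\mathbb{F}_p[z_1,\dots,z_n]^n$ with $\partial I/\partial z_i=q^{-1}\sum_{j\ne i}\Omega_{ij}I/(z_i-z_j)$ for all $i$ and $\sum_im_iI_i=0$. For $j\ne l$, $\Omega^M_{jl}$ is the $n\times n$ matrix over $\mathbb{F}_p$ with only nonzero entries $(\Omega^M_{jl})_{jj}=M_l$, $(\Omega^M_{jl})_{jl}=-M_l$, $(\Omega^M_{jl})_{lj}=-M_j$, $(\Omega^M_{jl})_{ll}=M_j$; $\Omega^M_j=\sum_{l=j+1}^n\Omega^M_{jl}$. Monomials are ordered lexicographically with $z_1>\dots>z_n$, and the $\mathrm{id}$-leading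 term of a nonzero $f\in\mathbb{F}_p[z]^n$ is $az^d$ with $z^d$ the largest monomial with nonzero coefficient $a\in\mathbb{F}_p^n$. *)

theory Defs
  imports "HOL-Library.Poly_Mapping" "HOL-Number_Theory.Cong"
begin

text \<open>Multivariate polynomials over a ring 'a: finitely supported maps from exponent
  vectors (finitely supported nat-to-nat maps, key i = exponent of z_i) to coefficients.  Variables are
  z_1, ..., z_n (keys 1..n).  The order on exponent vectors is the library order of
  poly_mapping, i.e. Fun_Lexorder.less_fun: d < d' iff at the smallest index k where
  they differ, d k < d' k.  This is the lexicographic order with z_1 > ... > z_n.\<close>

type_synonym 'a mpoly = "(nat \<Rightarrow>\<^sub>0 nat) \<Rightarrow>\<^sub>0 'a"

definition mp_var :: "nat \<Rightarrow> 'a::comm_ring_1 mpoly" where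
  "mp_var i = Poly_Mapping.single (Poly_Mapping.single i 1) 1"

definition mp_const :: "'a::comm_ring_1 \<Rightarrow> 'a mpoly" where
  "mp_const c = Poly_Mapping.single 0 c"

definition mp_pderiv :: "nat \<Rightarrow> 'a::comm_ring_1 mpoly \<Rightarrow> 'a mpoly" where
  "mp_pderiv i f = (\<Sum>mon::nat \<Rightarrow>\<^sub>0 nat\<in>Poly_Mapping.keys f.
      Poly_Mapping.single (mon - Poly_Mapping.single i 1) (of_nat (Poly_Mapping.lookup mon i) * Poly_Mapping.lookup f mon))"

definition Omega :: "(nat \<Rightarrow> nat) \<Rightarrow> nat \<Rightarrow> nat \<Rightarrow> nat \<Rightarrow> nat \<Rightarrow> int" where
  "Omega m i j r s =
     (if r = i \<and> s = i then - int (m j)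
      else if r = i \<and> s = j then int (m j)
      else if r = j \<and> s = i then int (m i)
      else if r = j \<and> s = j then - int (m i)
      else 0)"

definition KZ_M :: "nat \<Rightarrow> nat \<Rightarrow> (nat \<Rightarrow> nat) \<Rightarrow> nat \<Rightarrow> nat" where
  "KZ_M p q m i = (LEAST M::nat. 0 < M \<and> [M * q + m i = 0] (mod p))"

definition OmegaM :: "(nat \<Rightarrow> nat) \<Rightarrow> nat \<Rightarrow> nat \<Rightarrow> nat \<Rightarrow> nat \<Rightarrow> int" where
  "OmegaM M j l r s =
     (if r = j \<and> s = j then int (M l)
      else if r = j \<and> s = l then - int (M l)
      else if r = l \<and> s = j then - int (M j)
      else if r = l \<and> s = l then int (M j)
      else 0)"

text \<open>The equations
  dI/dz_i = q^{-1} sum_{j<>i} Omega_ij I/(z_i - z_j) are stated after multiplying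
  by q * prod_{k<>i}(z_i - z_k) (clearing denominators in the integral domain).\<close>
definition is_KZ_solution :: "nat \<Rightarrow> nat \<Rightarrow> (nat \<Rightarrow> nat) \<Rightarrow> (nat \<Rightarrow> 'a::field mpoly) \<Rightarrow> bool" where
  "is_KZ_solution n q m I \<longleftrightarrow>
     (\<forall>r\<in>{1..n}. \<forall>mon\<in>Poly_Mapping.keys (I r). Poly_Mapping.keys mon \<subseteq> {1..n}) \<and>
     (\<forall>i\<in>{1..n}. \<forall>r\<in>{1..n}.
        mp_const (of_nat q) * (\<Prod>k\<in>{1..n} - {i}. mp_var i - mp_var k) * mp_pderiv i (I r)
        = (\<Sum>j\<in>{1..n} - {i}.
             (\<Sum>s=1..n. mp_const (of_int (Omega m i j r s)) * I s)
             * (\<Prod>k\<in>{1..n} - {i, j}. mp_var i - mp_var k))) \<and>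
     (\<Sum>i=1..n. mp_const (of_nat (m i)) * I i) = 0"

definition id_leading_exp :: "nat \<Rightarrow> (nat \<Rightarrow> 'a::zero mpoly) \<Rightarrow> (nat \<Rightarrow>\<^sub>0 nat)" where
  "id_leading_exp n I = Max (\<Union>r\<in>{1..n}. Poly_Mapping.keys (I r))"

end

theory Submission imports Defs "HOL-Number_Theory.Residues" begin

abbreviation ee :: "nat \<Rightarrow> (nat \<Rightarrow>\<^sub>0 nat)" where "ee i \<equiv> Poly_Mapping.single i 1"

lemma lookup_single_mult:
  fixes g :: "('b::monoid_add) \<Rightarrow>\<^sub>0 ('a::semiring_1)"
  shows "Poly_Mapping.lookup (Poly_Mapping.single a c * g) y = c * (\<Sum>q. Poly_Mapping.lookup g q when y = a + q)"
proof -
  have "Poly_Mapping.lookup (Poly_Mapping.single a c * g) y = (\<Sum>l. (c when a = l) * (\<Sum>q. Poly_Mapping.lookup g q when y = l + q))"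
    by (simp add: lookup_mult lookup_single)
  also have "\<dots> = (\<Sum>l. (c * (\<Sum>q. Poly_Mapping.lookup g q when y = l + q)) when a = l)"
    by (simp add: when_mult)
  also have "\<dots> = c * (\<Sum>q. Poly_Mapping.lookup g q when y = a + q)"
    by simp
  finally show ?thesis .
qed

lemma lookup_const_mult:
  fixes g :: "'a::comm_ring_1 mpoly"
  shows "Poly_Mapping.lookup (mp_const c * g) y = c * Poly_Mapping.lookup g y"
  unfolding mp_const_def lookup_single_mult by simp

lemma mult_top:
  fixes f g :: "'a::comm_ring_1 mpoly"
  assumes f: "\<forall>x\<in>Poly_Mapping.keys f. x \<le> a" and g: "\<forall>x\<in>Poly_Mapping.keys g. x \<le> b"
  shows "Poly_Mapping.lookup (f*g) (a+b) = Poly_Mapping.lookup f a * Poly_Mapping.lookup g b" and "\<forall>x\<in>Poly_Mapping.keys (f*g). x \<le> a+b"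
proof -
  have "Poly_Mapping.lookup f l * (\<Sum>q. Poly_Mapping.lookup g q when a+b = l+q) = (if l = a then Poly_Mapping.lookup f a * Poly_Mapping.lookup g b else 0)" for l :: "nat \<Rightarrow>\<^sub>0 nat"
  proof (cases "l = a")
    case True
    then show ?thesis by (simp add: when_def)
  next
    case False
    show ?thesis
    proof (cases "Poly_Mapping.lookup f l = 0")
      case True with False show ?thesis by simp
    next
      case nz: False
      then have "l < a" using f False by (simp add: in_keys_iff order_le_neq_trans)
      have "(Poly_Mapping.lookup g q when a+b = l+q) = 0" for q
      proof (cases "Poly_Mapping.lookup g q = 0")
        case False
        then have "q \<le> b" using g by (simp add: in_keys_iff)
        then have "l + q < a + b" using \<open>l < a\<close> by (simp add: add_less_le_mono)
        then show ?thesis by (auto simp: when_def)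
      qed simp
      then show ?thesis using False by simp
    qed
  qed
  then show "Poly_Mapping.lookup (f*g) (a+b) = Poly_Mapping.lookup f a * Poly_Mapping.lookup g b"
    unfolding lookup_mult by simp
  show "\<forall>x\<in>Poly_Mapping.keys (f*g). x \<le> a+b"
    using keys_mult[of f g] f g by (auto intro: add_mono)
qed

lemma ee_less: "i < k \<Longrightarrow> ee k < ee i"
  unfolding less_poly_mapping.rep_eq less_fun_def
  by (rule exI[of _ i]) (auto simp: lookup_single)

lemma lookup_nat_minus: "Poly_Mapping.lookup (x - y) k = Poly_Mapping.lookup x k - Poly_Mapping.lookup (y :: nat \<Rightarrow>\<^sub>0 nat) k"
  by (simp add: minus_poly_mapping.rep_eq)

lemma ee_eq_iff: "ee i = ee k \<longleftrightarrow> i = k"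
  by (metis lookup_single_eq lookup_single_not_eq one_neq_zero)

lemma sub_ee:
  assumes "Poly_Mapping.lookup x i \<ge> 1"
  shows "(x = ee i + q) = (q = x - ee i)"
proof
  assume "x = ee i + q" then show "q = x - ee i" by simp
next
  assume "q = x - ee i"
  then show "x = ee i + q"
    using assms by (intro poly_mapping_eqI) (auto simp: lookup_add lookup_nat_minus lookup_single when_def)
qed

lemma lookup_pderiv:
  fixes f :: "'a::comm_ring_1 mpoly"
  shows "Poly_Mapping.lookup (mp_pderiv i f) y = of_nat (Poly_Mapping.lookup y i + 1) * Poly_Mapping.lookup f (y + ee i)"
proof -
  have "(of_nat (Poly_Mapping.lookup mon i) * Poly_Mapping.lookup f mon when mon - ee i = y)
        = (if mon = y + ee i then of_nat (Poly_Mapping.lookup y i + 1) * Poly_Mapping.lookup f (y + ee i) else 0)" for mon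
  proof (cases "mon = y + ee i")
    case True then show ?thesis by (simp add: lookup_add when_def)
  next
    case False
    show ?thesis
    proof (cases "Poly_Mapping.lookup mon i = 0")
      case True then show ?thesis using False by (simp add: when_def)
    next
      case nz: False
      then have "mon - ee i \<noteq> y" using False sub_ee[of mon i y] by (auto simp: add.commute)
      then show ?thesis using False by (simp add: when_def)
    qed
  qed
  then have "Poly_Mapping.lookup (mp_pderiv i f) y = (\<Sum>mon\<in>Poly_Mapping.keys f.
      (if mon = y + ee i then of_nat (Poly_Mapping.lookup y i + 1) * Poly_Mapping.lookup f (y + ee i) else 0))"
    unfolding mp_pderiv_def lookup_sum by (simp add: lookup_single)
  also have "\<dots> = of_nat (Poly_Mapping.lookup y i + 1) * Poly_Mapping.lookup f (y + ee i)"
    by (simp add: in_keys_iff)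
  finally show ?thesis .
qed

lemma lookup_euler:
  fixes f :: "'a::comm_ring_1 mpoly"
  shows "Poly_Mapping.lookup (mp_var i * mp_pderiv i f) x = of_nat (Poly_Mapping.lookup x i) * Poly_Mapping.lookup f x"
proof (cases "Poly_Mapping.lookup x i \<ge> 1")
  case True
  have "Poly_Mapping.lookup (mp_var i * mp_pderiv i f) x = (\<Sum>q. Poly_Mapping.lookup (mp_pderiv i f) q when q = x - ee i)"
    unfolding mp_var_def lookup_single_mult using sub_ee[OF True] by simp
  also have "\<dots> = Poly_Mapping.lookup (mp_pderiv i f) (x - ee i)" by simp
  also have "\<dots> = of_nat (Poly_Mapping.lookup x i) * Poly_Mapping.lookup f x"
    unfolding lookup_pderiv using True sub_ee[OF True, of "x - ee i"]
    by (simp add: lookup_nat_minus add.commute)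
  finally show ?thesis .
next
  case False
  have "(Poly_Mapping.lookup (mp_pderiv i f) q when x = ee i + q) = 0" for q
    using False by (auto simp: when_def lookup_add)
  then have "Poly_Mapping.lookup (mp_var i * mp_pderiv i f) x = 0"
    unfolding mp_var_def lookup_single_mult by simp
  moreover have "Poly_Mapping.lookup x i = 0" using False by simp
  ultimately show ?thesis by simp
qed

lemma factor_top:
  assumes "i \<noteq> k"
  shows "\<forall>x\<in>Poly_Mapping.keys (mp_var i - mp_var k :: 'a::comm_ring_1 mpoly). x \<le> ee (min i k)"
    and "Poly_Mapping.lookup (mp_var i - mp_var k :: 'a::comm_ring_1 mpoly) (ee (min i k)) = (if i < k then 1 else -1)"
proof -
  have "x \<le> ee (min i k)" if "x \<in> Poly_Mapping.keys (mp_var i - mp_var k :: 'a mpoly)" for x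
  proof -
    have "x = ee i \<or> x = ee k" using that keys_diff[of "mp_var i :: 'a mpoly" "mp_var k"]
      by (auto simp: mp_var_def)
    then show ?thesis using ee_less[of i k] ee_less[of k i] assms
      by (cases "i < k") (auto simp: min_def)
  qed
  then show "\<forall>x\<in>Poly_Mapping.keys (mp_var i - mp_var k :: 'a::comm_ring_1 mpoly). x \<le> ee (min i k)" by blast
  show "Poly_Mapping.lookup (mp_var i - mp_var k :: 'a::comm_ring_1 mpoly) (ee (min i k)) = (if i < k then 1 else -1)"
    using assms ee_eq_iff[of i k] by (auto simp: mp_var_def lookup_minus lookup_single when_def min_def)
qed

lemma prod_top:
  assumes "finite S" "i \<notin> S"
  shows "(\<forall>x\<in>Poly_Mapping.keys (\<Prod>k\<in>S. mp_var i - mp_var k :: 'a::comm_ring_1 mpoly). x \<le> (\<Sum>k\<in>S. ee (min i k)))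
     \<and> Poly_Mapping.lookup (\<Prod>k\<in>S. mp_var i - mp_var k :: 'a::comm_ring_1 mpoly) (\<Sum>k\<in>S. ee (min i k))
        = (\<Prod>k\<in>S. if i < k then 1 else -1)"
  using assms
proof (induction S rule: finite_induct)
  case empty
  then show ?case by simp
next
  case (insert k S)
  then have ik: "i \<noteq> k" by auto
  from insert have IH: "\<forall>x\<in>Poly_Mapping.keys (\<Prod>k\<in>S. mp_var i - mp_var k :: 'a::comm_ring_1 mpoly). x \<le> (\<Sum>k\<in>S. ee (min i k))"
     "Poly_Mapping.lookup (\<Prod>k\<in>S. mp_var i - mp_var k :: 'a::comm_ring_1 mpoly) (\<Sum>k\<in>S. ee (min i k))
        = (\<Prod>k\<in>S. if i < k then 1 else -1)" by auto
  have e1: "(\<Prod>k\<in>insert k S. mp_var i - mp_var k :: 'a::comm_ring_1 mpoly) = (mp_var i - mp_var k) * (\<Prod>k\<in>S. mp_var i - mp_var k)"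
    using insert(1,2) by simp
  have e2: "(\<Sum>k\<in>insert k S. ee (min i k)) = ee (min i k) + (\<Sum>k\<in>S. ee (min i k))"
    by (rule sum.insert[OF insert(1,2)])
  have e3: "(\<Prod>k\<in>insert k S. if i < k then 1 else -1 :: 'a) = (if i < k then 1 else -1) * (\<Prod>k\<in>S. if i < k then 1 else -1)"
    by (rule prod.insert[OF insert(1,2)])
  note M = mult_top[OF factor_top(1)[OF ik] IH(1)]
  show ?case unfolding e1 e2 e3 using M(2) M(1)[unfolded factor_top(2)[OF ik] IH(2)] by blast
qed


lemma char_card:
  assumes "prime p" "card (UNIV :: 'a::field set) = p"
  shows "CHAR('a) = p"
proof -
  have "CHAR('a) dvd p" using CHAR_dvd_CARD[where 'a='a] assms(2) by simp
  then have "CHAR('a) = 1 \<or> CHAR('a) = p" using assms(1) prime_nat_iff by blast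
  then show ?thesis using CHAR_not_1[where 'a='a] by auto
qed

lemma of_nat_mod_CHAR:
  fixes a :: nat
  shows "(of_nat (a mod CHAR('a)) :: 'a::field) = of_nat a"
proof -
  have "(of_nat a :: 'a) = of_nat (CHAR('a) * (a div CHAR('a)) + a mod CHAR('a))" by simp
  also have "\<dots> = of_nat (a mod CHAR('a))" by (simp only: of_nat_add of_nat_mult of_nat_CHAR) simp
  finally show ?thesis by simp
qed

lemma KZ_M_rel:
  assumes "prime p" "prime q" "q < p" "CHAR('a::field) = p"
  shows "(of_nat (KZ_M p q m j) :: 'a) * of_nat q + of_nat (m j) = 0"
proof -
  have cop: "coprime q p" using assms primes_coprime[of q p] by auto
  obtain x where x: "[q * x = Suc 0] (mod p)" using cong_solve_coprime_nat[OF cop] by blast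
  have qx: "(of_nat q * of_nat x :: 'a) = 1"
    using x of_nat_mod_CHAR[where 'a='a, of "q*x"] of_nat_mod_CHAR[where 'a='a, of "Suc 0"] assms(4)
    unfolding cong_def by (metis of_nat_1 One_nat_def of_nat_mult)
  have p0: "(of_nat p :: 'a) = 0" using assms(4) of_nat_CHAR[where 'a='a] by simp
  define M0 where "M0 = x * (p - 1) * m j + p"
  have p1: "(of_nat (p - 1) :: 'a) = of_nat p - 1" 
  proof -
    have "1 \<le> p" using assms(1) prime_gt_1_nat by (simp add: less_imp_le)
    then show ?thesis by (simp add: of_nat_diff)
  qed
  have "(of_nat (M0 * q + m j) :: 'a) = (of_nat q * of_nat x) * (of_nat p - 1) * of_nat (m j) + of_nat p * of_nat q + of_nat (m j)"
    unfolding M0_def by (simp only: of_nat_add of_nat_mult p1) (simp add: algebra_simps)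
  also have "\<dots> = 0" unfolding qx p0 by simp
  finally have "p dvd M0 * q + m j" using of_nat_eq_0_iff_char_dvd[where 'a='a, of "M0 * q + m j"] assms(4) by blast
  moreover have "0 < M0" unfolding M0_def using assms prime_gt_1_nat by simp
  ultimately have ex: "\<exists>M. 0 < M \<and> [M * q + m j = 0] (mod p)" by (auto simp: cong_0_iff)
  have "[KZ_M p q m j * q + m j = 0] (mod p)"
    unfolding KZ_M_def using LeastI_ex[OF ex] by blast
  then have "(of_nat (KZ_M p q m j * q + m j) :: 'a) = 0"
    using of_nat_eq_0_iff_char_dvd[where 'a='a, of "KZ_M p q m j * q + m j"] assms(4) by (simp only: cong_0_iff)
  then show ?thesis by simp
qed


lemma keys_const_mult: "Poly_Mapping.keys (mp_const c * (f :: 'a::comm_ring_1 mpoly)) \<subseteq> Poly_Mapping.keys f"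
  by (auto simp: in_keys_iff lookup_const_mult)

lemma core:
  fixes I :: "nat \<Rightarrow> 'a::field mpoly"
  assumes KZ: "is_KZ_solution n q m I"
   and dmax: "\<forall>r\<in>{1..n}. \<forall>x\<in>Poly_Mapping.keys (I r). x \<le> d"
   and i: "i \<in> {1..n}" and r: "r \<in> {1..n}"
  shows "of_nat q * of_nat (Poly_Mapping.lookup d i) * Poly_Mapping.lookup (I r) d
     = (\<Sum>j\<in>{i+1..n}. \<Sum>s=1..n. of_int (Omega m i j r s) * Poly_Mapping.lookup (I s) d)"
proof -
  define S where "S = {1..n} - {i}"
  define P where "P = (\<Prod>k\<in>S. mp_var i - mp_var k :: 'a mpoly)"
  define LE where "LE = (\<Sum>k\<in>S. ee (min i k))"
  define LC where "LC = (\<Prod>k\<in>S. if i < k then 1 else -1 :: 'a)"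
  define W where "W j = (\<Sum>s=1..n. of_int (Omega m i j r s) * Poly_Mapping.lookup (I s) d :: 'a)" for j
  define T where "T j = (\<Sum>s=1..n. mp_const (of_int (Omega m i j r s)) * I s :: 'a mpoly)" for j
  define Pj where "Pj j = (\<Prod>k\<in>S - {j}. mp_var i - mp_var k :: 'a mpoly)" for j
  have finS: "finite S" and iS: "i \<notin> S" unfolding S_def by auto
  have PT: "\<forall>x\<in>Poly_Mapping.keys P. x \<le> LE" "Poly_Mapping.lookup P LE = LC"
    using prod_top[OF finS iS, where 'a='a] unfolding P_def LE_def LC_def by auto
  have LCnz: "LC \<noteq> 0" unfolding LC_def using finS by (simp add: prod_zero_iff)
  have eq: "mp_const (of_nat q) * P * mp_pderiv i (I r) = (\<Sum>j\<in>S. T j * Pj j)"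
    using KZ i r unfolding is_KZ_solution_def P_def S_def T_def Pj_def
    by (simp add: Diff_insert2[symmetric] insert_commute)
  have "mp_var i * (mp_const (of_nat q) * P * mp_pderiv i (I r)) = (mp_const (of_nat q) * P) * (mp_var i * mp_pderiv i (I r))"
    by (simp add: ac_simps)
  moreover have "Poly_Mapping.lookup ((mp_const (of_nat q) * P) * (mp_var i * mp_pderiv i (I r))) (LE + d)
      = of_nat q * LC * (of_nat (Poly_Mapping.lookup d i) * Poly_Mapping.lookup (I r) d)"
  proof -
    have k1: "\<forall>x\<in>Poly_Mapping.keys (mp_const (of_nat q) * P). x \<le> LE"
      using PT(1) keys_const_mult by blast
    have k2: "\<forall>x\<in>Poly_Mapping.keys (mp_var i * mp_pderiv i (I r)). x \<le> d"
      using dmax r by (auto simp: in_keys_iff lookup_euler)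
    show ?thesis using mult_top(1)[OF k1 k2] PT(2) by (simp add: lookup_const_mult lookup_euler)
  qed
  moreover have "Poly_Mapping.lookup (mp_var i * (\<Sum>j\<in>S. T j * Pj j)) (LE + d) = LC * (\<Sum>j\<in>{i+1..n}. W j)"
  proof -
    have distr: "mp_var i * (\<Sum>j\<in>S. T j * Pj j) = (\<Sum>j\<in>S. T j * (mp_var i * Pj j))"
      by (simp add: sum_distrib_left ac_simps)
    have termj: "Poly_Mapping.lookup (T j * (mp_var i * Pj j)) (LE + d) = (if i < j then W j * LC else 0)"
      if j: "j \<in> S" for j
    proof -
      have finSj: "finite (S - {j})" and iSj: "i \<notin> S - {j}" using finS iS by auto
      define LEj where "LEj = (\<Sum>k\<in>S - {j}. ee (min i k))"
      define LCj where "LCj = (\<Prod>k\<in>S - {j}. if i < k then 1 else -1 :: 'a)"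
      have PjT: "\<forall>x\<in>Poly_Mapping.keys (Pj j). x \<le> LEj" "Poly_Mapping.lookup (Pj j) LEj = LCj"
        using prod_top[OF finSj iSj, where 'a='a] unfolding Pj_def LEj_def LCj_def by auto
      have vk: "\<forall>x\<in>Poly_Mapping.keys (mp_var i :: 'a mpoly). x \<le> ee i" by (simp add: mp_var_def)
      note VP = mult_top[OF vk PjT(1)]
      have VP1: "Poly_Mapping.lookup (mp_var i * Pj j) (ee i + LEj) = LCj"
        using VP(1) PjT(2) by (simp add: mp_var_def)
      have Tk: "\<forall>x\<in>Poly_Mapping.keys (T j). x \<le> d"
      proof
        fix x assume x: "x \<in> Poly_Mapping.keys (T j)"
        have "x \<in> (\<Union>s\<in>{1..n}. Poly_Mapping.keys (mp_const (of_int (Omega m i j r s)) * I s :: 'a mpoly))"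
          using x keys_sum[of "\<lambda>s. mp_const (of_int (Omega m i j r s)) * I s :: 'a mpoly" "{1..n}"]
          unfolding T_def by (rule subsetD[rotated])
        then obtain s where s: "s \<in> {1..n}" "x \<in> Poly_Mapping.keys (mp_const (of_int (Omega m i j r s)) * I s :: 'a mpoly)"
          by (rule UN_E)
        then have "x \<in> Poly_Mapping.keys (I s)" using keys_const_mult[of "of_int (Omega m i j r s)" "I s"] by blast
        then show "x \<le> d" using dmax s(1) by blast
      qed
      have Tl: "Poly_Mapping.lookup (T j) d = W j"
        unfolding T_def W_def by (simp add: lookup_sum lookup_const_mult)
      note TV = mult_top[OF Tk VP(2)]
      have LEs: "LE = ee (min i j) + LEj" unfolding LE_def LEj_def using sum.remove[OF finS j] by simp
      have LCs: "LC = (if i < j then 1 else -1) * LCj" unfolding LC_def LCj_def by (rule prod.remove[OF finS j])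
      show ?thesis
      proof (cases "i < j")
        case True
        then have "LE + d = d + (ee i + LEj)" using LEs by (simp add: ac_simps)
        then show ?thesis using TV(1) VP1 Tl LCs True by simp
      next
        case False
        then have ji: "j < i" using j iS by (cases "j = i") auto
        have "d + (ee i + LEj) < d + (ee j + LEj)"
          using ee_less[OF ji] by (simp add: add_strict_left_mono add_strict_right_mono)
        also have "\<dots> = LE + d" using LEs ji by (simp add: ac_simps min_def)
        finally have "LE + d \<notin> Poly_Mapping.keys (T j * (mp_var i * Pj j))" using TV(2) by (auto simp: not_le[symmetric])
        then show ?thesis using False by (simp add: in_keys_iff)
      qed
    qed
    have "Poly_Mapping.lookup (mp_var i * (\<Sum>j\<in>S. T j * Pj j)) (LE + d) = (\<Sum>j\<in>S. Poly_Mapping.lookup (T j * (mp_var i * Pj j)) (LE + d))"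
      unfolding distr lookup_sum ..
    also have "\<dots> = (\<Sum>j\<in>S. if i < j then W j * LC else 0)"
      using termj by simp
    also have "\<dots> = (\<Sum>j\<in>{j\<in>S. i < j}. W j * LC)" by (rule sum.inter_filter[OF finS, symmetric])
    also have "{j\<in>S. i < j} = {i+1..n}" unfolding S_def using i by auto
    finally show ?thesis by (simp add: sum_distrib_right sum_distrib_left mult.commute)
  qed
  ultimately have "of_nat q * LC * (of_nat (Poly_Mapping.lookup d i) * Poly_Mapping.lookup (I r) d) = LC * (\<Sum>j\<in>{i+1..n}. W j)"
    using eq by metis
  then show ?thesis using LCnz unfolding W_def by (simp add: ac_simps)
qed


theorem corollary5p2:
  fixes p q n :: nat and m :: "nat \<Rightarrow> nat" and I :: "nat \<Rightarrow> 'a::field mpoly"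
    and d :: "nat \<Rightarrow>\<^sub>0 nat" and C :: "nat \<Rightarrow> 'a"
  assumes "prime p" and "prime q" and "n \<ge> 2" and "p > n" and "p > q"
    and "card (UNIV :: 'a set) = p"
    and "\<forall>i\<in>{1..n}. 0 < m i \<and> m i < q"
    and "is_KZ_solution n q m I"
    and "\<exists>r\<in>{1..n}. I r \<noteq> 0"
    and "d = id_leading_exp n I"
    and "\<forall>j. C j = Poly_Mapping.lookup (I j) d"
  shows "(\<Sum>j=1..n. of_nat (KZ_M p q m j) * C j) = 0 \<and>
         (\<forall>j\<in>{1..n-1}. \<forall>r\<in>{1..n}.
           (\<Sum>l\<in>{j+1..n}. \<Sum>s=1..n. of_int (OmegaM (KZ_M p q m) j l r s) * C s)
           = of_nat (Poly_Mapping.lookup d j) * C r) \<and>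
         p dvd Poly_Mapping.lookup d n"
proof -
  note KZ = assms(8)
  have charp: "CHAR('a) = p" using char_card[OF assms(1) assms(6)] .
  have ofz: "(of_nat k :: 'a) = 0 \<longleftrightarrow> p dvd k" for k
    using of_nat_eq_0_iff_char_dvd[where 'a='a, of k] charp by simp
  have qnz: "(of_nat q :: 'a) \<noteq> 0"
  proof
    assume "(of_nat q :: 'a) = 0"
    then have "p dvd q" using ofz by simp
    then show False using assms(2,5) prime_gt_0_nat[OF assms(2)] by (auto dest: dvd_imp_le)
  qed
  have Mrel: "(of_nat (KZ_M p q m j) :: 'a) * of_nat q = - of_nat (m j)" for j
    using KZ_M_rel[OF assms(1,2,5) charp, of m j] by (simp add: eq_neg_iff_add_eq_0)
  define U where "U = (\<Union>r\<in>{1..n}. Poly_Mapping.keys (I r))"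
  have finU: "finite U" unfolding U_def by simp
  obtain r0 where r0: "r0 \<in> {1..n}" "I r0 \<noteq> 0" using assms(9) by blast
  have Une: "U \<noteq> {}" unfolding U_def using r0 by auto
  have dU: "d = Max U" using assms(10) unfolding id_leading_exp_def U_def by simp
  have dmax: "\<forall>r\<in>{1..n}. \<forall>x\<in>Poly_Mapping.keys (I r). x \<le> d"
  proof (intro ballI)
    fix r x assume "r \<in> {1..n}" "x \<in> Poly_Mapping.keys (I r)"
    then have "x \<in> U" unfolding U_def by blast
    then show "x \<le> d" unfolding dU using finU by (rule Max_ge[rotated])
  qed
  have "d \<in> U" unfolding dU using finU Une by (rule Max_in)
  then obtain r1 where r1: "r1 \<in> {1..n}" "d \<in> Poly_Mapping.keys (I r1)" unfolding U_def by blast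
  have Cr1: "C r1 \<noteq> 0" using r1(2) assms(11) by (simp add: in_keys_iff)
  have Csum: "(\<Sum>i=1..n. mp_const (of_nat (m i)) * I i) = (0 :: 'a mpoly)"
    using KZ unfolding is_KZ_solution_def by blast
  have core': "of_nat q * of_nat (Poly_Mapping.lookup d i) * C r
     = (\<Sum>j\<in>{i+1..n}. \<Sum>s=1..n. of_int (Omega m i j r s) * C s)" if "i \<in> {1..n}" "r \<in> {1..n}" for i r
    using core[OF KZ dmax that] assms(11) by simp
  have P1: "(\<Sum>j=1..n. of_nat (KZ_M p q m j) * C j) = 0"
  proof -
    have "(\<Sum>i=1..n. of_nat (m i) * C i) = (0::'a)"
      using arg_cong[OF Csum, of "\<lambda>f. Poly_Mapping.lookup f d"] assms(11)
      by (simp add: lookup_sum lookup_const_mult)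
    then have "of_nat q * (\<Sum>j=1..n. of_nat (KZ_M p q m j) * C j) = 0"
      by (simp add: sum_distrib_left mult.assoc[symmetric] mult.commute[of "of_nat q"] Mrel sum_negf)
    then show ?thesis using qnz by simp
  qed
  have P3: "p dvd Poly_Mapping.lookup d n"
  proof -
    have "n \<in> {1..n}" using assms(3) by simp
    from core'[OF this r1(1)] have "of_nat q * of_nat (Poly_Mapping.lookup d n) * C r1 = (0::'a)" by simp
    then have "(of_nat (Poly_Mapping.lookup d n) :: 'a) = 0" using qnz Cr1 by simp
    then show ?thesis using ofz by simp
  qed
  have P2: "\<forall>j\<in>{1..n-1}. \<forall>r\<in>{1..n}.
           (\<Sum>l\<in>{j+1..n}. \<Sum>s=1..n. of_int (OmegaM (KZ_M p q m) j l r s) * C s)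
           = of_nat (Poly_Mapping.lookup d j) * C r"
  proof (intro ballI)
    fix j r assume j: "j \<in> {1..n-1}" and r: "r \<in> {1..n}"
    have jn: "j \<in> {1..n}" using j by auto
    have ent: "of_nat q * (of_int (OmegaM (KZ_M p q m) j l r s) :: 'a) = of_int (Omega m j l r s)"
      if "l \<in> {j+1..n}" for l s
    proof -
      have "j \<noteq> l" using that by auto
      then show ?thesis unfolding OmegaM_def Omega_def
        using Mrel[of l] Mrel[of j] by (auto simp: mult.commute)
    qed
    have "of_nat q * (\<Sum>l\<in>{j+1..n}. \<Sum>s=1..n. of_int (OmegaM (KZ_M p q m) j l r s) * C s)
        = (\<Sum>l\<in>{j+1..n}. \<Sum>s=1..n. of_int (Omega m j l r s) * C s)"
      unfolding sum_distrib_left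
      by (intro sum.cong refl) (simp add: mult.assoc[symmetric] ent)
    also have "\<dots> = of_nat q * (of_nat (Poly_Mapping.lookup d j) * C r)"
      using core'[OF jn r] by (simp add: mult.assoc)
    finally show "(\<Sum>l\<in>{j+1..n}. \<Sum>s=1..n. of_int (OmegaM (KZ_M p q m) j l r s) * C s)
           = of_nat (Poly_Mapping.lookup d j) * C r" using qnz by simp
  qed
  show ?thesis using P1 P2 P3 by blast
qed

end
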